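(* Let $\mathcal{A}$ be a separating union-closed family with base set $[n]$ and height $h=4$, and let $\mathcal{B}=\{B_1,B_2,B_3\}$ be a choice of $\mathcal{B}(\mathcal{A})$ with $|\mathcal{B}|=3$. Suppose $|B|=n$, where $B=b(\mathcal{A}_{<n/2})$. Then for every $A \in \mathcal{A}_{<n/2}$ and every $i \in \{1,2,3\}$ with $|\mathrm{irr}_{\mathcal{B}}(B_i)| > 1$, we have $|A \cap \mathrm{irr}_{\mathcal{B}}(B_i)| \in \{0,\ |\mathrm{irr}_{\mathcal{B}}(B_i)|-1,\ |\mathrm{irr}_{\mathcal{B}}(B_i)|\}$.
   Context: A family of sets $\mathcal{A}$ is union-closed if it is a finite family of distinct finite sets with at least one nonempty member set, and $X,Y\in\mathcal{A}$ implies $X\cup Y\in\mathcal{A}$ (the empty set may be a member). For a family $\mathcal{F}$, $b(\mathcal{F})=\bigcup_{F\in\mathcal{F}}F$; the base set $b(\mathcal{A})$ is denoted $[n]=\{1,\dots,n\}$. $\mathcal{A}$ is separating if for any two distinct $x,y\in[n]$ there is $A\in\mathcal{A}$ containing exactly one of $x,y$. A chain in $\mathcal{A}$ is a subfamily any two distinct members of which are comparable under proper inclusion; the height $h$ of $\mathcal{A}$ is the maximum size of a chain in $\mathcal{A}$. For real $x\ge 0$, $\mathcal{A}_{<x}=\{A\in\mathcal{A} : |A|<x\}$. For $\mathcal{S}\subseteq\mathcal{A}$ and $S\in\mathcal{S}$, $\mathrm{irr}_{\mathcal{S}}(S)=\{s\in S : s\notin b(\mathcal{S}\setminus\{S\})\}$,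 and $\mathcal{S}$ is irredundant if $\mathrm{irr}_{\mathcal{S}}(S)\neq\emptyset$ for every $S\in\mathcal{S}$. With $B=b(\mathcal{A}_{<n/2})$, $\mathcal{B}(\mathcal{A})$ denotes any irredundant subfamily of $\mathcal{A}_{<n/2}$ of minimum size such that $b(\mathcal{B}(\mathcal{A}))=B$. *)

theory Defs
  imports Complex_Main
begin

definition union_closed :: "'a set set \<Rightarrow> bool" where
  "union_closed \<A> \<longleftrightarrow> finite \<A> \<and> (\<forall>X\<in>\<A>. finite X) \<and> (\<exists>X\<in>\<A>. X \<noteq> {})
     \<and> (\<forall>X\<in>\<A>. \<forall>Y\<in>\<A>. X \<union> Y \<in> \<A>)"

definition base :: "'a set set \<Rightarrow> 'a set" where
  "base \<F> = \<Union>\<F>"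

definition separating :: "'a set set \<Rightarrow> bool" where
  "separating \<A> \<longleftrightarrow> (\<forall>x\<in>base \<A>. \<forall>y\<in>base \<A>. x \<noteq> y \<longrightarrow>
      (\<exists>A\<in>\<A>. (x \<in> A \<and> y \<notin> A) \<or> (y \<in> A \<and> x \<notin> A)))"

definition is_chain :: "'a set set \<Rightarrow> 'a set set \<Rightarrow> bool" where
  "is_chain \<A> \<C> \<longleftrightarrow> \<C> \<subseteq> \<A> \<and> (\<forall>X\<in>\<C>. \<forall>Y\<in>\<C>. X \<noteq> Y \<longrightarrow> X \<subset> Y \<or> Y \<subset> X)"

definition height :: "'a set set \<Rightarrow> nat" where
  "height \<A> = Max {card \<C> | \<C>. is_chain \<A> \<C>}"

definition small_part :: "'a set set \<Rightarrow> real \<Rightarrow> 'a set set" where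
  "small_part \<A> x = {A \<in> \<A>. real (card A) < x}"

definition irr :: "'a set set \<Rightarrow> 'a set \<Rightarrow> 'a set" where
  "irr \<S> S = {s \<in> S. s \<notin> base (\<S> - {S})}"

definition irredundant :: "'a set set \<Rightarrow> bool" where
  "irredundant \<S> \<longleftrightarrow> (\<forall>S\<in>\<S>. irr \<S> S \<noteq> {})"

definition is_B_family :: "'a set set \<Rightarrow> 'a set set \<Rightarrow> bool" where
  "is_B_family \<A> \<B> \<longleftrightarrow>
     (let \<A>s = small_part \<A> (real (card (base \<A>)) / 2) in
       \<B> \<subseteq> \<A>s \<and> irredundant \<B> \<and> base \<B> = base \<A>s \<and>
       (\<forall>\<B>'. \<B>' \<subseteq> \<A>s \<and> irredundant \<B>' \<and> base \<B>' = base \<A>s \<longrightarrow> card \<B> \<le> card \<B>'))"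

end

theory Submission
  imports Defs
begin

lemma two_elems:
  assumes "finite S" "2 \<le> card S"
  obtains x y where "x \<in> S" "y \<in> S" "x \<noteq> y"
proof -
  have "S \<noteq> {}" using assms by auto
  then obtain x where x: "x \<in> S" by auto
  have "card (S - {x}) \<ge> 1" using assms x by auto
  then have "S - {x} \<noteq> {}" by (metis card.empty not_one_le_zero)
  then obtain y where "y \<in> S - {x}" by auto
  then show ?thesis using that x by auto
qed

lemma chain5:
  assumes "X1 \<subset> X2" "X2 \<subset> X3" "X3 \<subset> X4" "X4 \<subset> X5"
    and "X1 \<in> \<A>" "X2 \<in> \<A>" "X3 \<in> \<A>" "X4 \<in> \<A>" "X5 \<in> \<A>"
    and "finite \<A>"
  shows "5 \<le> height \<A>"
proof -
  let ?C = "{X1, X2, X3, X4, X5}"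
  have ch: "is_chain \<A> ?C"
    unfolding is_chain_def using assms by blast
  have l: "X1 \<subset> X3" "X1 \<subset> X4" "X1 \<subset> X5" "X2 \<subset> X4" "X2 \<subset> X5" "X3 \<subset> X5"
    using assms by blast+
  have c: "card ?C = 5"
  proof -
    have "X1 \<noteq> X2" "X1 \<noteq> X3" "X1 \<noteq> X4" "X1 \<noteq> X5" "X2 \<noteq> X3" "X2 \<noteq> X4"
      "X2 \<noteq> X5" "X3 \<noteq> X4" "X3 \<noteq> X5" "X4 \<noteq> X5"
      using assms(1-4) l by blast+
    then show ?thesis by simp
  qed
  have fin: "finite {card \<C> | \<C>. is_chain \<A> \<C>}"
  proof -
    have "{card \<C> | \<C>. is_chain \<A> \<C>} \<subseteq> card ` Pow \<A>"
      unfolding is_chain_def by auto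
    then show ?thesis using assms(10) finite_subset by blast
  qed
  have "card ?C \<in> {card \<C> | \<C>. is_chain \<A> \<C>}" using ch by blast
  then have "card ?C \<le> height \<A>" unfolding height_def using fin by (simp add: Max_ge)
  then show ?thesis using c by simp
qed

lemma core:
  assumes uc: "union_closed \<A>" and sep: "separating \<A>" and h: "height \<A> = 4"
    and PQR: "P \<in> \<A>" "Q \<in> \<A>" "R \<in> \<A>" and A: "A \<in> \<A>"
    and d: "P \<noteq> Q" "P \<noteq> R" "Q \<noteq> R"
    and irrQ: "irr {P,Q,R} Q \<noteq> {}" and irrR: "irr {P,Q,R} R \<noteq> {}"
  shows "card (A \<inter> irr {P,Q,R} P) \<in> {0, card (irr {P,Q,R} P) - 1, card (irr {P,Q,R} P)}"
proof (rule ccontr)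
  assume nc: "\<not> ?thesis"
  let ?I = "irr {P,Q,R} P"
  have fA: "finite \<A>" and fX: "\<forall>X\<in>\<A>. finite X" and un: "\<forall>X\<in>\<A>. \<forall>Y\<in>\<A>. X \<union> Y \<in> \<A>"
    using uc unfolding union_closed_def by auto
  have Ieq: "?I = {s \<in> P. s \<notin> Q \<and> s \<notin> R}"
    unfolding irr_def base_def using d by auto
  have fI: "finite ?I" using fX PQR Ieq by auto
  have "card ?I = card (?I \<inter> A) + card (?I - A)" using fI card_Int_Diff by blast
  moreover have "card (A \<inter> ?I) = card (?I \<inter> A)" by (simp add: Int_commute)
  ultimately have c1: "card (A \<inter> ?I) \<noteq> 0" and c2: "2 \<le> card (?I - A)" using nc by auto
  then obtain a where a: "a \<in> A" "a \<in> ?I" using fI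
    by (metis card.empty disjoint_iff)
  obtain x y where xy: "x \<in> ?I - A" "y \<in> ?I - A" "x \<noteq> y"
    using two_elems[OF _ c2] fI by blast
  have "irr {P,Q,R} R = {s \<in> R. s \<notin> P \<and> s \<notin> Q}"
    unfolding irr_def base_def using d by auto
  then obtain z where z: "z \<in> R" "z \<notin> P" "z \<notin> Q" using irrR by auto
  have xb: "x \<in> base \<A>" "y \<in> base \<A>" using xy Ieq PQR unfolding base_def by auto
  obtain C x' y' where C: "C \<in> \<A>" "x' \<in> C" "y' \<notin> C" "x' \<in> ?I - A" "y' \<in> ?I - A"
    using sep xb xy unfolding separating_def by blast
  have "5 \<le> height \<A>"
  proof (rule chain5[of Q "Q \<union> R" "Q \<union> R \<union> A" "Q \<union> R \<union> A \<union> C" "Q \<union> R \<union> A \<union> C \<union> P"])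
    show "Q \<subset> Q \<union> R" using z by auto
    show "Q \<union> R \<subset> Q \<union> R \<union> A" using a Ieq by auto
    show "Q \<union> R \<union> A \<subset> Q \<union> R \<union> A \<union> C" using C Ieq by auto
    show "Q \<union> R \<union> A \<union> C \<subset> Q \<union> R \<union> A \<union> C \<union> P" using C Ieq by auto
  qed (use PQR A C un fA in auto)
  then show False using h by simp
qed

lemma core2:
  assumes "union_closed \<A>" "separating \<A>" "height \<A> = 4"
    and "P \<in> \<A>" "Q \<in> \<A>" "R \<in> \<A>" "A \<in> \<A>"
    and "P \<noteq> Q" "P \<noteq> R" "Q \<noteq> R"
    and F: "F = {P,Q,R}" and "irredundant F"
  shows "card (A \<inter> irr F P) \<in> {0, card (irr F P) - 1, card (irr F P)}"
  using core[OF assms(1-10)] assms(12) unfolding F irredundant_def by auto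

theorem propositionH:
  fixes \<A> :: "nat set set" and n :: nat and B1 B2 B3 :: "nat set"
  assumes "union_closed \<A>"
    and "base \<A> = {1..n}"
    and "separating \<A>"
    and "height \<A> = 4"
    and "B1 \<noteq> B2" and "B1 \<noteq> B3" and "B2 \<noteq> B3"
    and "is_B_family \<A> {B1, B2, B3}"
    and "card (base (small_part \<A> (real n / 2))) = n"
  shows "\<forall>A \<in> small_part \<A> (real n / 2). \<forall>Bi \<in> {B1, B2, B3}.
           card (irr {B1, B2, B3} Bi) > 1 \<longrightarrow>
           card (A \<inter> irr {B1, B2, B3} Bi) \<in>
             {0, card (irr {B1, B2, B3} Bi) - 1, card (irr {B1, B2, B3} Bi)}"
proof (intro ballI impI)
  fix A Bi
  assume A: "A \<in> small_part \<A> (real n / 2)" and Bi: "Bi \<in> {B1, B2, B3}"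
  have sub: "\<forall>t. small_part \<A> t \<subseteq> \<A>" unfolding small_part_def by auto
  have Bs: "{B1,B2,B3} \<subseteq> \<A>" and irrd: "irredundant {B1,B2,B3}"
    using assms(8) sub unfolding is_B_family_def Let_def by blast+
  have A': "A \<in> \<A>" using A sub by blast
  have e1: "{B1,B2,B3} = {B2,B1,B3}" "{B1,B2,B3} = {B3,B1,B2}" by auto
  from Bi have "Bi = B1 \<or> Bi = B2 \<or> Bi = B3" by auto
  then show "card (A \<inter> irr {B1, B2, B3} Bi) \<in>
             {0, card (irr {B1, B2, B3} Bi) - 1, card (irr {B1, B2, B3} Bi)}"
  proof (elim disjE)
    assume "Bi = B1" then show ?thesis
      using core2[OF assms(1,3,4) _ _ _ A' assms(5-7) refl irrd] Bs by auto
  next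
    assume "Bi = B2" then show ?thesis
      using core2[OF assms(1,3,4) _ _ _ A' _ _ assms(6) e1(1) irrd] Bs assms(5-7) by auto
  next
    assume "Bi = B3" then show ?thesis
      using core2[OF assms(1,3,4) _ _ _ A' _ _ assms(5) e1(2) irrd] Bs assms(5-7) by auto
  qed
qed

end
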